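(* Let $L$ be an IL-algebra and $F$ a distributive filter of $L$. Then the lattice $L/F$ (with $[x]\cup[y]=[x\cup y]$, $[x]\cap[y]=[x\cap y]$) is distributive.
   Context: An IL-algebra is a structure $(L,\cup,\cap,\bot,\to,\ast,1)$ such that $(L,\cup,\cap,\bot)$ is a lattice with least element $\bot$, $(L,\ast,1)$ is a commutative monoid with unit $1$, and for all $x,y,z\in L$: $x\ast y\leq z$ iff $x\leq y\to z$. A filter of $L$ is a non-empty $F\subseteq L$ with $1\in F$, such that $x,y\in F$ implies $x\ast y\in F$ and $x\cap y\in F$, and $x\in F$, $x\leq y$ implies $y\in F$. A filter $F$ is distributive if $((x\cup y)\cap(x\cup z))\to(x\cup(y\cap z))\in F$ for all $x,y,z\in L$. For a filter $F$, $x\,\rho_F\,y$ iff $x\to y\in F$ and $y\to x\in F$; $[x]$ is the $\rho_F$-class of $x$ and $L/F=\{[x]:x\in L\}$, with the operations on classes well defined. *)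

theory Defs
  imports Main
begin

definition IL_algebra ::
  "'a set \<Rightarrow> ('a \<Rightarrow> 'a \<Rightarrow> 'a) \<Rightarrow> ('a \<Rightarrow> 'a \<Rightarrow> 'a) \<Rightarrow> 'a \<Rightarrow>
   ('a \<Rightarrow> 'a \<Rightarrow> 'a) \<Rightarrow> ('a \<Rightarrow> 'a \<Rightarrow> 'a) \<Rightarrow> 'a \<Rightarrow> bool" where
  "IL_algebra L jn mt bt imp mult e \<longleftrightarrow>
     bt \<in> L \<and> e \<in> L \<and>
     (\<forall>x\<in>L. \<forall>y\<in>L. jn x y \<in> L \<and> mt x y \<in> L \<and> imp x y \<in> L \<and> mult x y \<in> L) \<and>
     (\<forall>x\<in>L. \<forall>y\<in>L. jn x y = jn y x \<and> mt x y = mt y x) \<and>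
     (\<forall>x\<in>L. \<forall>y\<in>L. \<forall>z\<in>L. jn (jn x y) z = jn x (jn y z)
                        \<and> mt (mt x y) z = mt x (mt y z)) \<and>
     (\<forall>x\<in>L. \<forall>y\<in>L. jn x (mt x y) = x \<and> mt x (jn x y) = x) \<and>
     (\<forall>x\<in>L. mt bt x = bt) \<and>
     (\<forall>x\<in>L. \<forall>y\<in>L. \<forall>z\<in>L. mult (mult x y) z = mult x (mult y z)) \<and>
     (\<forall>x\<in>L. \<forall>y\<in>L. mult x y = mult y x) \<and>
     (\<forall>x\<in>L. mult x e = x) \<and>
     (\<forall>x\<in>L. \<forall>y\<in>L. \<forall>z\<in>L. mt (mult x y) z = mult x y \<longleftrightarrow> mt x (imp y z) = x)"

definition lat_le :: "('a \<Rightarrow> 'a \<Rightarrow> 'a) \<Rightarrow> 'a \<Rightarrow> 'a \<Rightarrow> bool" where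
  "lat_le mt x y \<longleftrightarrow> mt x y = x"

definition IL_filter ::
  "'a set \<Rightarrow> ('a \<Rightarrow> 'a \<Rightarrow> 'a) \<Rightarrow> ('a \<Rightarrow> 'a \<Rightarrow> 'a) \<Rightarrow> 'a \<Rightarrow> 'a set \<Rightarrow> bool" where
  "IL_filter L mt mult e F \<longleftrightarrow>
     F \<subseteq> L \<and> F \<noteq> {} \<and> e \<in> F \<and>
     (\<forall>x\<in>F. \<forall>y\<in>F. mult x y \<in> F \<and> mt x y \<in> F) \<and>
     (\<forall>x\<in>F. \<forall>y\<in>L. lat_le mt x y \<longrightarrow> y \<in> F)"

definition distributive_filter ::
  "'a set \<Rightarrow> ('a \<Rightarrow> 'a \<Rightarrow> 'a) \<Rightarrow> ('a \<Rightarrow> 'a \<Rightarrow> 'a) \<Rightarrow> ('a \<Rightarrow> 'a \<Rightarrow> 'a) \<Rightarrow>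
   ('a \<Rightarrow> 'a \<Rightarrow> 'a) \<Rightarrow> 'a \<Rightarrow> 'a set \<Rightarrow> bool" where
  "distributive_filter L jn mt imp mult e F \<longleftrightarrow>
     IL_filter L mt mult e F \<and>
     (\<forall>x\<in>L. \<forall>y\<in>L. \<forall>z\<in>L.
        imp (mt (jn x y) (jn x z)) (jn x (mt y z)) \<in> F)"

definition rho :: "('a \<Rightarrow> 'a \<Rightarrow> 'a) \<Rightarrow> 'a set \<Rightarrow> 'a \<Rightarrow> 'a \<Rightarrow> bool" where
  "rho imp F x y \<longleftrightarrow> imp x y \<in> F \<and> imp y x \<in> F"

definition cls :: "'a set \<Rightarrow> ('a \<Rightarrow> 'a \<Rightarrow> 'a) \<Rightarrow> 'a set \<Rightarrow> 'a \<Rightarrow> 'a set" where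
  "cls L imp F x = {y \<in> L. rho imp F x y}"

definition quot :: "'a set \<Rightarrow> ('a \<Rightarrow> 'a \<Rightarrow> 'a) \<Rightarrow> 'a set \<Rightarrow> 'a set set" where
  "quot L imp F = cls L imp F ` L"

definition qop :: "'a set \<Rightarrow> ('a \<Rightarrow> 'a \<Rightarrow> 'a) \<Rightarrow> 'a set \<Rightarrow> ('a \<Rightarrow> 'a \<Rightarrow> 'a) \<Rightarrow>
    'a set \<Rightarrow> 'a set \<Rightarrow> 'a set" where
  "qop L imp F op A B = cls L imp F (op (SOME a. a \<in> A) (SOME b. b \<in> B))"

end

theory Submission
  imports Defs
begin

locale ILF =
  fixes L jn mt bt imp mult e F
  assumes A: "IL_algebra L jn mt bt imp mult e"
    and D: "distributive_filter L jn mt imp mult e F"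
begin

lemma cl: "x \<in> L \<Longrightarrow> y \<in> L \<Longrightarrow> jn x y \<in> L \<and> mt x y \<in> L \<and> imp x y \<in> L \<and> mult x y \<in> L"
  using A unfolding IL_algebra_def by blast
lemma cjn[simp]: "x \<in> L \<Longrightarrow> y \<in> L \<Longrightarrow> jn x y \<in> L" using cl by blast
lemma cmt[simp]: "x \<in> L \<Longrightarrow> y \<in> L \<Longrightarrow> mt x y \<in> L" using cl by blast
lemma cimp[simp]: "x \<in> L \<Longrightarrow> y \<in> L \<Longrightarrow> imp x y \<in> L" using cl by blast
lemma cmult[simp]: "x \<in> L \<Longrightarrow> y \<in> L \<Longrightarrow> mult x y \<in> L" using cl by blast
lemma ce[simp]: "e \<in> L" using A unfolding IL_algebra_def by blast
lemma jc: "x \<in> L \<Longrightarrow> y \<in> L \<Longrightarrow> jn x y = jn y x" using A unfolding IL_algebra_def by blast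
lemma mc: "x \<in> L \<Longrightarrow> y \<in> L \<Longrightarrow> mt x y = mt y x" using A unfolding IL_algebra_def by blast
lemma ja: "x \<in> L \<Longrightarrow> y \<in> L \<Longrightarrow> z \<in> L \<Longrightarrow> jn (jn x y) z = jn x (jn y z)" using A unfolding IL_algebra_def by blast
lemma ma: "x \<in> L \<Longrightarrow> y \<in> L \<Longrightarrow> z \<in> L \<Longrightarrow> mt (mt x y) z = mt x (mt y z)" using A unfolding IL_algebra_def by blast
lemma ab1: "x \<in> L \<Longrightarrow> y \<in> L \<Longrightarrow> jn x (mt x y) = x" using A unfolding IL_algebra_def by blast
lemma ab2: "x \<in> L \<Longrightarrow> y \<in> L \<Longrightarrow> mt x (jn x y) = x" using A unfolding IL_algebra_def by blast
lemma ua: "x \<in> L \<Longrightarrow> y \<in> L \<Longrightarrow> z \<in> L \<Longrightarrow> mult (mult x y) z = mult x (mult y z)" using A unfolding IL_algebra_def by blast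
lemma uc: "x \<in> L \<Longrightarrow> y \<in> L \<Longrightarrow> mult x y = mult y x" using A unfolding IL_algebra_def by blast
lemma ue: "x \<in> L \<Longrightarrow> mult x e = x" using A unfolding IL_algebra_def by blast
lemma res: "x \<in> L \<Longrightarrow> y \<in> L \<Longrightarrow> z \<in> L \<Longrightarrow> lat_le mt (mult x y) z \<longleftrightarrow> lat_le mt x (imp y z)"
  using A unfolding IL_algebra_def lat_le_def by blast

lemma FL: "F \<subseteq> L" and eF: "e \<in> F" and Fmult: "x \<in> F \<Longrightarrow> y \<in> F \<Longrightarrow> mult x y \<in> F"
  and Fmt: "x \<in> F \<Longrightarrow> y \<in> F \<Longrightarrow> mt x y \<in> F"
  and Fup: "x \<in> F \<Longrightarrow> y \<in> L \<Longrightarrow> lat_le mt x y \<Longrightarrow> y \<in> F"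
  and Fd: "x \<in> L \<Longrightarrow> y \<in> L \<Longrightarrow> z \<in> L \<Longrightarrow> imp (mt (jn x y) (jn x z)) (jn x (mt y z)) \<in> F"
  using D unfolding distributive_filter_def IL_filter_def by blast+

abbreviation le (infix "\<sqsubseteq>" 50) where "x \<sqsubseteq> y \<equiv> lat_le mt x y"

lemma mi: "x \<in> L \<Longrightarrow> mt x x = x"
  by (metis ab1 ab2 cmt)
lemma ji: "x \<in> L \<Longrightarrow> jn x x = x"
  by (metis ab1 ab2 cjn)
lemma le_jn: "x \<in> L \<Longrightarrow> y \<in> L \<Longrightarrow> x \<sqsubseteq> y \<longleftrightarrow> jn x y = y"
  unfolding lat_le_def by (metis ab1 ab2 jc mc)
lemma lrefl: "x \<in> L \<Longrightarrow> x \<sqsubseteq> x" by (simp add: lat_le_def mi)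
lemma ltrans: "x \<in> L \<Longrightarrow> y \<in> L \<Longrightarrow> z \<in> L \<Longrightarrow> x \<sqsubseteq> y \<Longrightarrow> y \<sqsubseteq> z \<Longrightarrow> x \<sqsubseteq> z"
  unfolding lat_le_def by (metis ma)
lemma lanti: "x \<in> L \<Longrightarrow> y \<in> L \<Longrightarrow> x \<sqsubseteq> y \<Longrightarrow> y \<sqsubseteq> x \<Longrightarrow> x = y"
  unfolding lat_le_def by (metis mc)
lemma mlb1: "x \<in> L \<Longrightarrow> y \<in> L \<Longrightarrow> mt x y \<sqsubseteq> x"
  unfolding lat_le_def by (metis ma mc mi)
lemma mlb2: "x \<in> L \<Longrightarrow> y \<in> L \<Longrightarrow> mt x y \<sqsubseteq> y"
  unfolding lat_le_def by (metis ma mi)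
lemma mglb: "x \<in> L \<Longrightarrow> y \<in> L \<Longrightarrow> z \<in> L \<Longrightarrow> z \<sqsubseteq> x \<Longrightarrow> z \<sqsubseteq> y \<Longrightarrow> z \<sqsubseteq> mt x y"
  unfolding lat_le_def by (metis ma)
lemma jub1: "x \<in> L \<Longrightarrow> y \<in> L \<Longrightarrow> x \<sqsubseteq> jn x y"
  unfolding lat_le_def by (simp add: ab2)
lemma jub2: "x \<in> L \<Longrightarrow> y \<in> L \<Longrightarrow> y \<sqsubseteq> jn x y"
  unfolding lat_le_def by (metis ab2 jc)
lemma jlub: "x \<in> L \<Longrightarrow> y \<in> L \<Longrightarrow> z \<in> L \<Longrightarrow> x \<sqsubseteq> z \<Longrightarrow> y \<sqsubseteq> z \<Longrightarrow> jn x y \<sqsubseteq> z"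
  by (metis cjn ja le_jn)

lemma mono1: "a \<in> L \<Longrightarrow> b \<in> L \<Longrightarrow> c \<in> L \<Longrightarrow> a \<sqsubseteq> b \<Longrightarrow> mult a c \<sqsubseteq> mult b c"
proof -
  assume h: "a \<in> L" "b \<in> L" "c \<in> L" "a \<sqsubseteq> b"
  have "b \<sqsubseteq> imp c (mult b c)" using res[of b c "mult b c"] h lrefl by simp
  then have "a \<sqsubseteq> imp c (mult b c)" using ltrans[of a b "imp c (mult b c)"] h by simp
  then show ?thesis using res[of a c "mult b c"] h by simp
qed
lemma mono2: "a \<in> L \<Longrightarrow> b \<in> L \<Longrightarrow> c \<in> L \<Longrightarrow> a \<sqsubseteq> b \<Longrightarrow> mult c a \<sqsubseteq> mult c b"
  using mono1[of a b c] uc[of a c] uc[of b c] by simp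
lemma mp: "x \<in> L \<Longrightarrow> y \<in> L \<Longrightarrow> mult (imp x y) x \<sqsubseteq> y"
  using res[of "imp x y" x y] lrefl by simp
lemma le_F: "a \<in> L \<Longrightarrow> b \<in> L \<Longrightarrow> a \<sqsubseteq> b \<Longrightarrow> imp a b \<in> F"
proof -
  assume h: "a \<in> L" "b \<in> L" "a \<sqsubseteq> b"
  have "mult e a = a" using ue[of a] uc[of e a] h by simp
  then have LE: "e \<sqsubseteq> imp a b" using res[of e a b] h by simp
  show ?thesis using Fup[OF eF _ LE] h by simp
qed
lemma inF: "x \<in> F \<Longrightarrow> x \<in> L" using FL by blast

lemma imp_trans: "x \<in> L \<Longrightarrow> y \<in> L \<Longrightarrow> z \<in> L \<Longrightarrow> imp x y \<in> F \<Longrightarrow> imp y z \<in> F \<Longrightarrow> imp x z \<in> F"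
proof -
  assume h: "x \<in> L" "y \<in> L" "z \<in> L" "imp x y \<in> F" "imp y z \<in> F"
  define f where "f = mult (imp y z) (imp x y)"
  have fF: "f \<in> F" using Fmult h f_def by simp
  have xyL: "imp x y \<in> L" "imp y z \<in> L" using h by auto
  have e1: "mult f x = mult (imp y z) (mult (imp x y) x)" using ua xyL h f_def by simp
  have e2: "mult (imp y z) (mult (imp x y) x) \<sqsubseteq> mult (imp y z) y"
    using mono2[OF _ _ _ mp[of x y]] h xyL by simp
  have e3: "mult (imp y z) y \<sqsubseteq> z" using mp[of y z] h by simp
  have "mult f x \<sqsubseteq> z" using ltrans[OF _ _ _ e2 e3] e1 h xyL by simp
  then have LE: "f \<sqsubseteq> imp x z" using res h f_def by simp
  show ?thesis using Fup[OF fF _ LE] h by simp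
qed

lemma cong_mt: "x \<in> L \<Longrightarrow> y \<in> L \<Longrightarrow> z \<in> L \<Longrightarrow> imp x y \<in> F \<Longrightarrow> imp (mt x z) (mt y z) \<in> F"
proof -
  assume h: "x \<in> L" "y \<in> L" "z \<in> L" "imp x y \<in> F"
  define f where "f = mt (imp x y) (imp z z)"
  have zz: "imp z z \<in> F" using le_F lrefl h by simp
  have fF: "f \<in> F" using Fmt h zz f_def by simp
  have fL: "f \<in> L" using h f_def by simp
  have a1: "mult f (mt x z) \<sqsubseteq> mult (imp x y) (mt x z)"
    using mono1[of f "imp x y" "mt x z"] mlb1[of "imp x y" "imp z z"] h fL f_def by simp
  have a2: "mult (imp x y) (mt x z) \<sqsubseteq> mult (imp x y) x"
    using mono2[of "mt x z" x "imp x y"] mlb1[of x z] h by simp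
  have a3: "mult f (mt x z) \<sqsubseteq> mult (imp x y) x"
    using ltrans[OF _ _ _ a1 a2] h fL by simp
  have 1: "mult f (mt x z) \<sqsubseteq> y" using ltrans[OF _ _ _ a3 mp[of x y]] h fL by simp
  have b1: "mult f (mt x z) \<sqsubseteq> mult (imp z z) (mt x z)"
    using mono1[of f "imp z z" "mt x z"] mlb2[of "imp x y" "imp z z"] h fL f_def by simp
  have b2: "mult (imp z z) (mt x z) \<sqsubseteq> mult (imp z z) z"
    using mono2[of "mt x z" z "imp z z"] mlb2[of x z] h by simp
  have b3: "mult f (mt x z) \<sqsubseteq> mult (imp z z) z"
    using ltrans[OF _ _ _ b1 b2] h fL by simp
  have 2: "mult f (mt x z) \<sqsubseteq> z" using ltrans[OF _ _ _ b3 mp[of z z]] h fL by simp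
  have "mult f (mt x z) \<sqsubseteq> mt y z" using mglb 1 2 h fL by simp
  then have LE: "f \<sqsubseteq> imp (mt x z) (mt y z)" using res h fL by simp
  show ?thesis using Fup[OF fF _ LE] h by simp
qed

lemma cong_jn: "x \<in> L \<Longrightarrow> y \<in> L \<Longrightarrow> z \<in> L \<Longrightarrow> imp x y \<in> F \<Longrightarrow> imp (jn x z) (jn y z) \<in> F"
proof -
  assume h: "x \<in> L" "y \<in> L" "z \<in> L" "imp x y \<in> F"
  define f where "f = mt (imp x y) (imp z z)"
  have zz: "imp z z \<in> F" using le_F lrefl h by simp
  have fF: "f \<in> F" using Fmt h zz f_def by simp
  have fL: "f \<in> L" using h f_def by simp
  have "mult f x \<sqsubseteq> mult (imp x y) x"
    using mono1[of f "imp x y" x] mlb1 h fL f_def by simp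
  then have "mult f x \<sqsubseteq> y" using ltrans[OF _ _ _ _ mp[of x y]] h fL by simp
  then have "mult f x \<sqsubseteq> jn y z" using ltrans[OF _ _ _ _ jub1[of y z]] h fL by simp
  then have 1: "x \<sqsubseteq> imp f (jn y z)" using res[of x f "jn y z"] uc[of f x] h fL by simp
  have "mult f z \<sqsubseteq> mult (imp z z) z"
    using mono1[of f "imp z z" z] mlb2 h fL f_def by simp
  then have "mult f z \<sqsubseteq> z" using ltrans[OF _ _ _ _ mp[of z z]] h fL by simp
  then have "mult f z \<sqsubseteq> jn y z" using ltrans[OF _ _ _ _ jub2[of y z]] h fL by simp
  then have 2: "z \<sqsubseteq> imp f (jn y z)" using res[of z f "jn y z"] uc[of f z] h fL by simp
  have "jn x z \<sqsubseteq> imp f (jn y z)" using jlub 1 2 h fL by simp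
  then have "mult (jn x z) f \<sqsubseteq> jn y z" using res[of "jn x z" f "jn y z"] h fL by simp
  then have LE: "f \<sqsubseteq> imp (jn x z) (jn y z)" using res[of f "jn x z" "jn y z"] uc[of f "jn x z"] h fL by simp
  show ?thesis using Fup[OF fF _ LE] h by simp
qed

abbreviation eqv (infix "\<approx>" 50) where "x \<approx> y \<equiv> rho imp F x y"

lemma eq_refl: "x \<in> L \<Longrightarrow> x \<approx> x" unfolding rho_def using le_F lrefl by blast
lemma eq_sym: "x \<approx> y \<Longrightarrow> y \<approx> x" unfolding rho_def by blast
lemma eq_trans: "x \<in> L \<Longrightarrow> y \<in> L \<Longrightarrow> z \<in> L \<Longrightarrow> x \<approx> y \<Longrightarrow> y \<approx> z \<Longrightarrow> x \<approx> z"
  unfolding rho_def using imp_trans by blast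
lemma le_eq: "x \<in> L \<Longrightarrow> y \<in> L \<Longrightarrow> x \<sqsubseteq> y \<Longrightarrow> imp y x \<in> F \<Longrightarrow> x \<approx> y"
  unfolding rho_def using le_F by blast
lemma eq_mt1: "x \<in> L \<Longrightarrow> y \<in> L \<Longrightarrow> z \<in> L \<Longrightarrow> x \<approx> y \<Longrightarrow> mt x z \<approx> mt y z"
  unfolding rho_def using cong_mt by blast
lemma eq_jn1: "x \<in> L \<Longrightarrow> y \<in> L \<Longrightarrow> z \<in> L \<Longrightarrow> x \<approx> y \<Longrightarrow> jn x z \<approx> jn y z"
  unfolding rho_def using cong_jn by blast
lemma eq_mt: "x \<in> L \<Longrightarrow> y \<in> L \<Longrightarrow> u \<in> L \<Longrightarrow> v \<in> L \<Longrightarrow> x \<approx> y \<Longrightarrow> u \<approx> v \<Longrightarrow> mt x u \<approx> mt y v"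
proof -
  assume h: "x \<in> L" "y \<in> L" "u \<in> L" "v \<in> L" "x \<approx> y" "u \<approx> v"
  have "mt x u \<approx> mt y u" using eq_mt1 h by blast
  moreover have "mt u y \<approx> mt v y" using eq_mt1 h by blast
  then have "mt y u \<approx> mt y v" using mc[of u y] mc[of v y] h by simp
  ultimately show ?thesis by (rule eq_trans[rotated 3]) (use h in auto)
qed
lemma eq_jn: "x \<in> L \<Longrightarrow> y \<in> L \<Longrightarrow> u \<in> L \<Longrightarrow> v \<in> L \<Longrightarrow> x \<approx> y \<Longrightarrow> u \<approx> v \<Longrightarrow> jn x u \<approx> jn y v"
proof -
  assume h: "x \<in> L" "y \<in> L" "u \<in> L" "v \<in> L" "x \<approx> y" "u \<approx> v"
  have "jn x u \<approx> jn y u" using eq_jn1 h by blast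
  moreover have "jn u y \<approx> jn v y" using eq_jn1 h by blast
  then have "jn y u \<approx> jn y v" using jc[of u y] jc[of v y] h by simp
  ultimately show ?thesis by (rule eq_trans[rotated 3]) (use h in auto)
qed

lemma jdist: "x \<in> L \<Longrightarrow> y \<in> L \<Longrightarrow> z \<in> L \<Longrightarrow> jn x (mt y z) \<approx> mt (jn x y) (jn x z)"
proof -
  assume h: "x \<in> L" "y \<in> L" "z \<in> L"
  have "jn x (mt y z) \<sqsubseteq> mt (jn x y) (jn x z)"
  proof (rule mglb)
    show "jn x (mt y z) \<sqsubseteq> jn x y"
      using jlub[of x "mt y z" "jn x y"] jub1[of x y] jub2[of x y] mlb1[of y z] ltrans[of "mt y z" y "jn x y"] h by simp
    show "jn x (mt y z) \<sqsubseteq> jn x z"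
      using jlub[of x "mt y z" "jn x z"] jub1[of x z] jub2[of x z] mlb2[of y z] ltrans[of "mt y z" z "jn x z"] h by simp
  qed (use h in auto)
  then show ?thesis using le_eq Fd h by simp
qed

lemma mdist: "x \<in> L \<Longrightarrow> y \<in> L \<Longrightarrow> z \<in> L \<Longrightarrow> mt x (jn y z) \<approx> jn (mt x y) (mt x z)"
proof -
  assume h: "x \<in> L" "y \<in> L" "z \<in> L"
  let ?a = "mt x y"
  have aL: "?a \<in> L" using h by simp
  have s1: "jn ?a (mt x z) \<approx> mt (jn ?a x) (jn ?a z)" using jdist aL h by simp
  have "jn ?a x = x" using ab1[of x y] jc[of ?a x] h by simp
  then have s1': "jn ?a (mt x z) \<approx> mt x (jn ?a z)" using s1 by simp
  have "jn ?a z = jn z ?a" using jc h by simp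
  have s2: "jn z ?a \<approx> mt (jn z x) (jn z y)" using jdist h by simp
  then have s2': "jn ?a z \<approx> mt (jn x z) (jn y z)" using jc[of ?a z] jc[of z x] jc[of z y] h by simp
  have s3: "mt x (jn ?a z) \<approx> mt x (mt (jn x z) (jn y z))"
    using eq_mt[OF _ _ _ _ eq_refl[of x] s2'] h by simp
  have "mt x (mt (jn x z) (jn y z)) = mt (mt x (jn x z)) (jn y z)" using ma h by simp
  also have "\<dots> = mt x (jn y z)" using ab2 h by simp
  finally have s4: "mt x (jn ?a z) \<approx> mt x (jn y z)" using s3 by simp
  have "jn ?a (mt x z) \<approx> mt x (jn y z)" using eq_trans[OF _ _ _ s1' s4] h by simp
  then show ?thesis using eq_sym by blast
qed

lemma cls_eq: "x \<in> L \<Longrightarrow> y \<in> L \<Longrightarrow> x \<approx> y \<Longrightarrow> cls L imp F x = cls L imp F y"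
proof -
  assume h: "x \<in> L" "y \<in> L" "x \<approx> y"
  have "z \<approx> x \<longleftrightarrow> z \<approx> y" if "z \<in> L" for z
    using eq_trans[of z x y] eq_trans[of z y x] eq_sym[of x y] h that by blast
  have "x \<approx> z \<longleftrightarrow> y \<approx> z" if "z \<in> L" for z
    using eq_trans[of x y z] eq_trans[of y x z] eq_sym[of x y] h that by blast
  then show ?thesis unfolding cls_def by auto
qed

lemma some_cls: "x \<in> L \<Longrightarrow> (SOME a. a \<in> cls L imp F x) \<in> L \<and> x \<approx> (SOME a. a \<in> cls L imp F x)"
proof -
  assume h: "x \<in> L"
  have "x \<in> cls L imp F x" unfolding cls_def using eq_refl h by simp
  then have "(SOME a. a \<in> cls L imp F x) \<in> cls L imp F x" by (rule someI)
  then show ?thesis unfolding cls_def by simp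
qed

lemma qop_mt: "x \<in> L \<Longrightarrow> y \<in> L \<Longrightarrow> qop L imp F mt (cls L imp F x) (cls L imp F y) = cls L imp F (mt x y)"
proof -
  assume h: "x \<in> L" "y \<in> L"
  define a where "a = (SOME a. a \<in> cls L imp F x)"
  define b where "b = (SOME a. a \<in> cls L imp F y)"
  have a: "a \<in> L" "x \<approx> a" using some_cls[OF h(1)] a_def by auto
  have b: "b \<in> L" "y \<approx> b" using some_cls[OF h(2)] b_def by auto
  have E: "mt x y \<approx> mt a b" using eq_mt[OF h(1) a(1) h(2) b(1) a(2) b(2)] .
  have "cls L imp F (mt a b) = cls L imp F (mt x y)"
    using cls_eq[OF _ _ eq_sym[OF E]] h a b by simp
  then show ?thesis unfolding qop_def a_def b_def .
qed
lemma qop_jn: "x \<in> L \<Longrightarrow> y \<in> L \<Longrightarrow> qop L imp F jn (cls L imp F x) (cls L imp F y) = cls L imp F (jn x y)"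
proof -
  assume h: "x \<in> L" "y \<in> L"
  define a where "a = (SOME a. a \<in> cls L imp F x)"
  define b where "b = (SOME a. a \<in> cls L imp F y)"
  have a: "a \<in> L" "x \<approx> a" using some_cls[OF h(1)] a_def by auto
  have b: "b \<in> L" "y \<approx> b" using some_cls[OF h(2)] b_def by auto
  have E: "jn x y \<approx> jn a b" using eq_jn[OF h(1) a(1) h(2) b(1) a(2) b(2)] .
  have "cls L imp F (jn a b) = cls L imp F (jn x y)"
    using cls_eq[OF _ _ eq_sym[OF E]] h a b by simp
  then show ?thesis unfolding qop_def a_def b_def .
qed

lemma main:
  "\<forall>A\<in>quot L imp F. \<forall>B\<in>quot L imp F. \<forall>C\<in>quot L imp F.
           qop L imp F mt A (qop L imp F jn B C)
         = qop L imp F jn (qop L imp F mt A B) (qop L imp F mt A C)"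
proof (intro ballI)
  fix A B C assume "A \<in> quot L imp F" "B \<in> quot L imp F" "C \<in> quot L imp F"
  then obtain a b c where h: "a \<in> L" "b \<in> L" "c \<in> L" and
    e: "A = cls L imp F a" "B = cls L imp F b" "C = cls L imp F c"
    unfolding quot_def by blast
  show "qop L imp F mt A (qop L imp F jn B C)
         = qop L imp F jn (qop L imp F mt A B) (qop L imp F mt A C)"
  proof -
    have "qop L imp F mt A (qop L imp F jn B C) = cls L imp F (mt a (jn b c))"
      unfolding e using h by (simp add: qop_mt qop_jn)
    also have "\<dots> = cls L imp F (jn (mt a b) (mt a c))"
      by (rule cls_eq) (use h mdist[OF h] in auto)
    also have "\<dots> = qop L imp F jn (qop L imp F mt A B) (qop L imp F mt A C)"
      unfolding e using h by (simp add: qop_mt qop_jn)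
    finally show ?thesis .
  qed
qed

end

theorem mainTheorem8:
  assumes "IL_algebra L jn mt bt imp mult e"
    and "distributive_filter L jn mt imp mult e F"
  shows "\<forall>A\<in>quot L imp F. \<forall>B\<in>quot L imp F. \<forall>C\<in>quot L imp F.
           qop L imp F mt A (qop L imp F jn B C)
         = qop L imp F jn (qop L imp F mt A B) (qop L imp F mt A C)"
proof -
  interpret ILF L jn mt bt imp mult e F using assms by unfold_locales
  show ?thesis by (rule main)
qed

end
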